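(* For an $E$-linear code $C$ of length $2n$: (1) $(C^{\perp_{S_L}})_{Res}=(C_{Res})^{\perp_S}=(C^{\perp_{S_L}})_{Tor}$; (2) $(C^{\perp_{S_R}})_{Res}=(C_{Tor})^{\perp_S}$ and $(C^{\perp_{S_R}})_{Tor}=\mathbb{F}_2^{2n}$; (3) $(C^{\perp_S})_{Res}=(C_{Tor})^{\perp_S}$ and $(C^{\perp_S})_{Tor}=(C_{Res})^{\perp_S}$.
   Context: $E=\langle \kappa,\tau \mid 2\kappa=2\tau=0,\ \kappa^2=\kappa,\ \tau^2=\tau,\ \kappa\tau=\kappa,\ \tau\kappa=\tau\rangle$ is the non-unital ring $\{0,\kappa,\tau,\zeta\}$, $\zeta=\kappa+\tau$, with $e\kappa=e\tau=e$, $e\zeta=0$ for all $e\in E$. Every $e\in E$ is uniquely $u\kappa+v\zeta$ ($u,v\in\mathbb{F}_2$); $\pi(u\kappa+v\zeta)=u$, componentwise. For $v\in\mathbb{F}_2^m$ and $e\in E$, $ev=(ev_1,\dots,ev_m)$ with $0\cdot e=0$, $1\cdot e=e$. An $E$-linear code of length $2n$ is a left $E$-submodule $C\subseteq E^{2n}$; $C_{Res}=\pi(C)$, $C_{Tor}=\{v\in\mathbb{F}_2^{2n}:\zeta v\in C\}$. Symplectic inner product (over $E$ or $\mathbb{F}_2$): $\langle (u|v),(u'|v')\rangle_s=\sum_i u_iv'_i+\sum_i v_iu'_i$, halves of length $n$. For binary $B$, $B^{\perp_S}=\{z\in\mathbb{F}_2^{2n}:\langle z,w\rangle_s=0\ \forall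 w\in B\}$. For $E$-linear $C$: $C^{\perp_{S_L}}=\{z\in E^{2n}:\langle z,w\rangle_s=0\ \forall w\in C\}$, $C^{\perp_{S_R}}=\{z\in E^{2n}:\langle w,z\rangle_s=0\ \forall w\in C\}$, $C^{\perp_S}=C^{\perp_{S_L}}\cap C^{\perp_{S_R}}$. *)

theory Defs
  imports Main "HOL-Library.Z2"
begin

text \<open>The non-unital ring E = {0, kappa, tau, zeta}, zeta = kappa + tau, characteristic 2,
  with e*kappa = e*tau = e and e*zeta = 0 for all e. The binary field F_2 is the type bit.\<close>

datatype Eelt = E0 | Kap | Tau | Zet

instantiation Eelt :: comm_monoid_add
begin
definition zero_Eelt :: Eelt where "zero_Eelt = E0"
fun plus_Eelt :: "Eelt \<Rightarrow> Eelt \<Rightarrow> Eelt" where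
  "plus_Eelt E0 y = y"
| "plus_Eelt x E0 = x"
| "plus_Eelt Kap Kap = E0" | "plus_Eelt Kap Tau = Zet" | "plus_Eelt Kap Zet = Tau"
| "plus_Eelt Tau Kap = Zet" | "plus_Eelt Tau Tau = E0" | "plus_Eelt Tau Zet = Kap"
| "plus_Eelt Zet Kap = Tau" | "plus_Eelt Zet Tau = Kap" | "plus_Eelt Zet Zet = E0"
instance
proof
  fix a b c :: Eelt
  show "a + b + c = a + (b + c)" by (cases a; cases b; cases c; simp)
  show "a + b = b + a" by (cases a; cases b; simp)
  show "0 + a = a" by (simp add: zero_Eelt_def)
qed
end

instantiation Eelt :: times
begin
fun times_Eelt :: "Eelt \<Rightarrow> Eelt \<Rightarrow> Eelt" where
  "times_Eelt x Kap = x"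
| "times_Eelt x Tau = x"
| "times_Eelt x Zet = E0"
| "times_Eelt x E0 = E0"
instance ..
end

lemma E_relations:
  "Kap + Kap = 0" "Tau + Tau = 0" "Kap * Kap = Kap" "Tau * Tau = Tau"
  "Kap * Tau = Kap" "Tau * Kap = Tau" "Zet = Kap + Tau"
  by (simp_all add: zero_Eelt_def)

fun Epi :: "Eelt \<Rightarrow> bit" where
  "Epi E0 = 0" | "Epi Kap = 1" | "Epi Tau = 1" | "Epi Zet = 0"

lemma Epi_decomp: "Epi ((if u = 1 then Kap else 0) + (if (v::bit) = 1 then Zet else 0)) = (u::bit)"
  by (cases u rule: bit.exhaust; cases v rule: bit.exhaust; simp add: zero_Eelt_def)

definition bsc :: "bit \<Rightarrow> Eelt \<Rightarrow> Eelt" where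
  "bsc b e = (if b = 0 then 0 else e)"

text \<open>Vectors of length 2n are lists of length 2n; halves are indices < n and n..<2n.\<close>
definition Evecs :: "nat \<Rightarrow> Eelt list set" where
  "Evecs n = {x. length x = 2 * n}"
definition Bvecs :: "nat \<Rightarrow> bit list set" where
  "Bvecs n = {x. length x = 2 * n}"

definition E_linear :: "nat \<Rightarrow> Eelt list set \<Rightarrow> bool" where
  "E_linear n C \<longleftrightarrow> C \<subseteq> Evecs n \<and> replicate (2*n) 0 \<in> C
     \<and> (\<forall>x\<in>C. \<forall>y\<in>C. map2 (+) x y \<in> C)
     \<and> (\<forall>e. \<forall>x\<in>C. map (\<lambda>c. e * c) x \<in> C)"

definition Res :: "Eelt list set \<Rightarrow> bit list set" where
  "Res C = (map Epi) ` C"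

definition Tor :: "nat \<Rightarrow> Eelt list set \<Rightarrow> bit list set" where
  "Tor n C = {v \<in> Bvecs n. map (\<lambda>b. bsc b Zet) v \<in> C}"

definition sympE :: "nat \<Rightarrow> Eelt list \<Rightarrow> Eelt list \<Rightarrow> Eelt" where
  "sympE n x y = (\<Sum>i<n. x ! i * y ! (n + i)) + (\<Sum>i<n. x ! (n + i) * y ! i)"
definition sympB :: "nat \<Rightarrow> bit list \<Rightarrow> bit list \<Rightarrow> bit" where
  "sympB n x y = (\<Sum>i<n. x ! i * y ! (n + i)) + (\<Sum>i<n. x ! (n + i) * y ! i)"

definition perpB :: "nat \<Rightarrow> bit list set \<Rightarrow> bit list set" where
  "perpB n B = {z \<in> Bvecs n. \<forall>w\<in>B. sympB n z w = 0}"
definition perpSL :: "nat \<Rightarrow> Eelt list set \<Rightarrow> Eelt list set" where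
  "perpSL n C = {z \<in> Evecs n. \<forall>w\<in>C. sympE n z w = 0}"
definition perpSR :: "nat \<Rightarrow> Eelt list set \<Rightarrow> Eelt list set" where
  "perpSR n C = {z \<in> Evecs n. \<forall>w\<in>C. sympE n w z = 0}"
definition perpS :: "nat \<Rightarrow> Eelt list set \<Rightarrow> Eelt list set" where
  "perpS n C = perpSL n C \<inter> perpSR n C"

end

theory Submission
  imports Defs
begin

fun Esg :: "Eelt \<Rightarrow> bit" where
  "Esg E0 = 0" | "Esg Kap = 0" | "Esg Tau = 1" | "Esg Zet = 1"

lemma Epi_add: "Epi (a+b) = Epi a + Epi b"
  by (cases a; cases b; simp)
lemma Esg_add: "Esg (a+b) = Esg a + Esg b"
  by (cases a; cases b; simp)
lemma Epi_mult: "Epi (a*b) = Epi a * Epi b"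
  by (cases a; cases b; simp)
lemma Esg_mult: "Esg (a*b) = Esg a * Epi b"
  by (cases a; cases b; simp)
lemma Eelt_eq0: "(a = 0) \<longleftrightarrow> Epi a = 0 \<and> Esg a = 0"
  by (cases a; simp add: zero_Eelt_def)

lemma Epi_sum: "Epi (sum f A) = (\<Sum>x\<in>A. Epi (f x))"
  by (induction A rule: infinite_finite_induct) (simp_all add: zero_Eelt_def Epi_add)
lemma Esg_sum: "Esg (sum f A) = (\<Sum>x\<in>A. Esg (f x))"
  by (induction A rule: infinite_finite_induct) (simp_all add: zero_Eelt_def Esg_add)

lemma sympE_zero:
  assumes "z \<in> Evecs n" "w \<in> Evecs n"
  shows "(sympE n z w = 0) \<longleftrightarrow>
     sympB n (map Epi z) (map Epi w) = 0 \<and> sympB n (map Esg z) (map Epi w) = 0"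
proof -
  from assms have lz: "length z = 2*n" and lw: "length w = 2*n" by (auto simp: Evecs_def)
  have "Epi (sympE n z w) = sympB n (map Epi z) (map Epi w)"
    unfolding sympE_def sympB_def Epi_add Epi_sum Epi_mult
    using lz lw by (intro arg_cong2[where f="(+)"] sum.cong) auto
  moreover have "Esg (sympE n z w) = sympB n (map Esg z) (map Epi w)"
    unfolding sympE_def sympB_def Esg_add Esg_sum Esg_mult
    using lz lw by (intro arg_cong2[where f="(+)"] sum.cong) auto
  ultimately show ?thesis using Eelt_eq0 by metis
qed

lemma sympB_sym: "sympB n x y = sympB n y x"
proof -
  have a: "(\<Sum>i<n. x ! i * y ! (n + i)) = (\<Sum>i<n. y ! (n + i) * x ! i)"
    by (rule sum.cong) (simp_all add: mult.commute)
  have b: "(\<Sum>i<n. x ! (n + i) * y ! i) = (\<Sum>i<n. y ! i * x ! (n + i))"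
    by (rule sum.cong) (simp_all add: mult.commute)
  show ?thesis unfolding sympB_def a b by (rule add.commute)
qed

lemma sympB_zero_left:
  assumes "\<forall>i<2*n. x ! i = 0" shows "sympB n x y = 0"
  unfolding sympB_def using assms by simp

definition embK :: "bit list \<Rightarrow> Eelt list" where "embK u = map (\<lambda>b. bsc b Kap) u"
definition embZ :: "bit list \<Rightarrow> Eelt list" where "embZ u = map (\<lambda>b. bsc b Zet) u"

lemma bit_cases2: "(b::bit) = 0 \<or> b = 1"
  by (cases b rule: bit.exhaust) auto

lemma embK_P: "map Epi (embK u) = u"
proof -
  have "\<And>b. Epi (bsc b Kap) = b" using bit_cases2 by (auto simp: bsc_def zero_Eelt_def)
  then show ?thesis unfolding embK_def by (induction u) auto
qed

lemma embK_S: "map Esg (embK u) = replicate (length u) 0"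
  unfolding embK_def by (induction u) (auto simp: bsc_def zero_Eelt_def)
lemma embZ_P: "map Epi (embZ u) = replicate (length u) 0"
  unfolding embZ_def by (induction u) (auto simp: bsc_def zero_Eelt_def)
lemma embZ_S: "map Esg (embZ u) = u"
proof -
  have "\<And>b. Esg (bsc b Zet) = b" using bit_cases2 by (auto simp: bsc_def zero_Eelt_def)
  then show ?thesis unfolding embZ_def by (induction u) auto
qed
lemma embK_len[simp]: "length (embK u) = length u" by (simp add: embK_def)
lemma embZ_len[simp]: "length (embZ u) = length u" by (simp add: embZ_def)

lemma sympB_repl_left: "sympB n (replicate (2*n) 0) y = 0"
  by (rule sympB_zero_left) simp
lemma sympB_repl_right: "sympB n y (replicate (2*n) 0) = 0"
  using sympB_repl_left sympB_sym by metis

lemma P_in_Tor: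
  assumes "E_linear n C" "w \<in> C" shows "map Epi w \<in> Tor n C"
proof -
  have "map (\<lambda>c. Zet * c) w \<in> C" using assms unfolding E_linear_def by blast
  moreover have "map (\<lambda>c. Zet * c) w = embZ (map Epi w)"
  proof -
    have "\<And>c. Zet * c = bsc (Epi c) Zet" by (case_tac c) (auto simp: bsc_def zero_Eelt_def)
    then show ?thesis unfolding embZ_def by simp
  qed
  moreover have "length w = 2*n" using assms unfolding E_linear_def Evecs_def by blast
  ultimately show ?thesis unfolding Tor_def Bvecs_def embZ_def by simp
qed

lemma map2_self: "map2 f w (map g w) = map (\<lambda>c. f c (g c)) w"
  by (induction w) auto

lemma S_in_Tor:
  assumes "E_linear n C" "w \<in> C" shows "map Esg w \<in> Tor n C"
proof -
  have "map (\<lambda>c. Kap * c) w \<in> C" using assms unfolding E_linear_def by blast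
  then have "map2 (+) w (map (\<lambda>c. Kap * c) w) \<in> C" using assms unfolding E_linear_def by blast
  moreover have "map2 (+) w (map (\<lambda>c. Kap * c) w) = embZ (map Esg w)"
  proof -
    have "\<And>c. c + Kap * c = bsc (Esg c) Zet" by (case_tac c) (auto simp: bsc_def zero_Eelt_def)
    then show ?thesis unfolding embZ_def map2_self by simp
  qed
  moreover have "length w = 2*n" using assms unfolding E_linear_def Evecs_def by blast
  ultimately show ?thesis unfolding Tor_def Bvecs_def embZ_def by simp
qed

theorem mainTheorem5:
  fixes n :: nat and C :: "Eelt list set"
  assumes "E_linear n C"
  shows "(Res (perpSL n C) = perpB n (Res C) \<and> perpB n (Res C) = Tor n (perpSL n C))
    \<and> (Res (perpSR n C) = perpB n (Tor n C) \<and> Tor n (perpSR n C) = Bvecs n)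
    \<and> (Res (perpS n C) = perpB n (Tor n C) \<and> Tor n (perpS n C) = perpB n (Res C))"
proof -
  have CE: "C \<subseteq> Evecs n" using assms unfolding E_linear_def by blast
  have lenP: "\<And>z. z \<in> Evecs n \<Longrightarrow> length (map Epi z) = 2*n" by (simp add: Evecs_def)
  have lenS: "\<And>z. z \<in> Evecs n \<Longrightarrow> length (map Esg z) = 2*n" by (simp add: Evecs_def)
  have EK: "\<And>u. u \<in> Bvecs n \<Longrightarrow> embK u \<in> Evecs n" by (simp add: Evecs_def Bvecs_def)
  have EZ: "\<And>u. u \<in> Bvecs n \<Longrightarrow> embZ u \<in> Evecs n" by (simp add: Evecs_def Bvecs_def)
  have SKz: "\<And>u. u \<in> Bvecs n \<Longrightarrow> map Esg (embK u) = replicate (2*n) 0"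
    by (simp add: embK_S Bvecs_def)
  have PZz: "\<And>u. u \<in> Bvecs n \<Longrightarrow> map Epi (embZ u) = replicate (2*n) 0"
    by (simp add: embZ_P Bvecs_def)
  have TorB: "\<And>D. Tor n D \<subseteq> Bvecs n" by (auto simp: Tor_def)
  have perpBB: "\<And>B. perpB n B \<subseteq> Bvecs n" by (auto simp: perpB_def)
  have SL: "\<And>z. z \<in> perpSL n C \<longleftrightarrow> z \<in> Evecs n \<and> (\<forall>w\<in>C.
      sympB n (map Epi z) (map Epi w) = 0 \<and> sympB n (map Esg z) (map Epi w) = 0)"
    unfolding perpSL_def using sympE_zero CE by blast
  have SR: "\<And>z. z \<in> perpSR n C \<longleftrightarrow> z \<in> Evecs n \<and> (\<forall>w\<in>C.
      sympB n (map Epi z) (map Epi w) = 0 \<and> sympB n (map Epi z) (map Esg w) = 0)"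
    unfolding perpSR_def using sympE_zero CE sympB_sym by (smt (verit, best) mem_Collect_eq subsetD)
  have ResC: "\<And>u. u \<in> Res C \<longleftrightarrow> (\<exists>w\<in>C. u = map Epi w)" by (auto simp: Res_def)
  have perpTor: "\<And>u. u \<in> perpB n (Tor n C) \<longleftrightarrow> u \<in> Bvecs n \<and> (\<forall>w\<in>C.
      sympB n u (map Epi w) = 0 \<and> sympB n u (map Esg w) = 0)"
  proof
    fix u assume "u \<in> perpB n (Tor n C)"
    then show "u \<in> Bvecs n \<and> (\<forall>w\<in>C. sympB n u (map Epi w) = 0 \<and> sympB n u (map Esg w) = 0)"
      using P_in_Tor[OF assms] S_in_Tor[OF assms] unfolding perpB_def by blast
  next
    fix u assume H: "u \<in> Bvecs n \<and> (\<forall>w\<in>C. sympB n u (map Epi w) = 0 \<and> sympB n u (map Esg w) = 0)"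
    show "u \<in> perpB n (Tor n C)" unfolding perpB_def
    proof (safe)
      show "u \<in> Bvecs n" using H by blast
      fix t assume "t \<in> Tor n C"
      then have "embZ t \<in> C" by (simp add: Tor_def embZ_def)
      then show "sympB n u t = 0" using H embZ_S by metis
    qed
  qed
  have perpRes: "\<And>u. u \<in> perpB n (Res C) \<longleftrightarrow> u \<in> Bvecs n \<and> (\<forall>w\<in>C.
      sympB n u (map Epi w) = 0)"
    by (auto simp: perpB_def Res_def)
  have A1: "Res (perpSL n C) = perpB n (Res C)"
  proof
    show "Res (perpSL n C) \<subseteq> perpB n (Res C)"
    proof
      fix u assume "u \<in> Res (perpSL n C)"
      then obtain z where z: "z \<in> perpSL n C" "u = map Epi z" by (auto simp: Res_def)
      then show "u \<in> perpB n (Res C)" unfolding perpRes using SL lenP by (auto simp: Bvecs_def)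
    qed
    show "perpB n (Res C) \<subseteq> Res (perpSL n C)"
    proof
      fix u assume u: "u \<in> perpB n (Res C)"
      then have ub: "u \<in> Bvecs n" using perpBB by blast
      have "embK u \<in> perpSL n C" unfolding SL embK_P SKz[OF ub]
        using EK[OF ub] u perpRes sympB_repl_left by blast
      then show "u \<in> Res (perpSL n C)" unfolding Res_def using embK_P by (metis image_eqI)
    qed
  qed
  have A2: "perpB n (Res C) = Tor n (perpSL n C)"
  proof -
    have "\<And>v. v \<in> Tor n (perpSL n C) \<longleftrightarrow> v \<in> perpB n (Res C)"
    proof -
      fix v
      have "v \<in> Tor n (perpSL n C) \<longleftrightarrow> v \<in> Bvecs n \<and> embZ v \<in> perpSL n C"
        by (simp add: Tor_def embZ_def)
      also have "\<dots> \<longleftrightarrow> v \<in> perpB n (Res C)"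
        unfolding SL perpRes embZ_S using EZ PZz sympB_repl_left by auto
      finally show "v \<in> Tor n (perpSL n C) \<longleftrightarrow> v \<in> perpB n (Res C)" .
    qed
    then show ?thesis by blast
  qed
  have B1: "Res (perpSR n C) = perpB n (Tor n C)"
  proof
    show "Res (perpSR n C) \<subseteq> perpB n (Tor n C)"
    proof
      fix u assume "u \<in> Res (perpSR n C)"
      then obtain z where z: "z \<in> perpSR n C" "u = map Epi z" by (auto simp: Res_def)
      then show "u \<in> perpB n (Tor n C)" unfolding perpTor using SR lenP by (auto simp: Bvecs_def)
    qed
    show "perpB n (Tor n C) \<subseteq> Res (perpSR n C)"
    proof
      fix u assume u: "u \<in> perpB n (Tor n C)"
      then have ub: "u \<in> Bvecs n" using perpBB by blast
      have "embK u \<in> perpSR n C" unfolding SR embK_P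
        using EK[OF ub] u perpTor by blast
      then show "u \<in> Res (perpSR n C)" unfolding Res_def using embK_P by (metis image_eqI)
    qed
  qed
  have B2: "Tor n (perpSR n C) = Bvecs n"
  proof
    show "Tor n (perpSR n C) \<subseteq> Bvecs n" by (rule TorB)
    show "Bvecs n \<subseteq> Tor n (perpSR n C)"
    proof
      fix v assume v: "v \<in> Bvecs n"
      have "embZ v \<in> perpSR n C" unfolding SR PZz[OF v] using EZ[OF v] sympB_repl_left by blast
      then show "v \<in> Tor n (perpSR n C)" using v by (simp add: Tor_def embZ_def)
    qed
  qed
  have C1: "Res (perpS n C) = perpB n (Tor n C)"
  proof
    show "Res (perpS n C) \<subseteq> perpB n (Tor n C)"
      using B1 unfolding perpS_def Res_def by blast
    show "perpB n (Tor n C) \<subseteq> Res (perpS n C)"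
    proof
      fix u assume u: "u \<in> perpB n (Tor n C)"
      then have ub: "u \<in> Bvecs n" using perpBB by blast
      have "embK u \<in> perpSR n C" unfolding SR embK_P
        using EK[OF ub] u perpTor by blast
      moreover have "embK u \<in> perpSL n C" unfolding SL embK_P SKz[OF ub]
        using EK[OF ub] u perpTor sympB_repl_left by blast
      ultimately have "embK u \<in> perpS n C" by (simp add: perpS_def)
      then show "u \<in> Res (perpS n C)" unfolding Res_def using embK_P by (metis image_eqI)
    qed
  qed
  have C2: "Tor n (perpS n C) = perpB n (Res C)"
  proof -
    have "Tor n (perpS n C) = Tor n (perpSL n C) \<inter> Tor n (perpSR n C)"
      by (auto simp: Tor_def perpS_def)
    then show ?thesis using A2 B2 perpBB by blast
  qed
  show ?thesis using A1 A2 B1 B2 C1 C2 by blast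
qed

end
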